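(* Assume (A1), (A2), (A3) and that $\{x^k\}_{k\in\mathbb N}$ is bounded. Then there exist $c_0>0$ and $k'\in\mathbb N$ such that for all $k\ge k'$, $$\operatorname{dist}(0,\partial_L\Phi(z^{k+1}))\le c_0\sum_{h=k-\tau-K}^{k}\|x^{h+1}-x^h\|\quad\text{and}\quad\operatorname{dist}(0,\partial_L\Psi(x^{k+1}))\le c_0\sum_{h=k-\tau-K}^{k}\|x^{h+1}-x^h\|,$$ where $x^i:=x^0$ for $i<0$.
   Context: Let $\mathcal H=\mathcal H_1\times\cdots\times\mathcal H_m$ be a product of finite-dimensional real Euclidean spaces with $\langle x,y\rangle=\sum_j\langle x_j,y_j\rangle$. For $x\in\mathcal H$, $x_{-j}$ denotes $x$ with its $j$th block removed and $(x_{-j};y)$ the point with $j$th block replaced by $y\in\mathcal H_j$. Let $f:\mathcal H\to\mathbb R$ be $C^1$, $r_j:\mathcal H_j\to(-\infty,\infty]$ proper lower semicontinuous, $r(x)=\sum_jr_j(x_j)$, $\Psi=f+r$ bounded below. $r$ is prox-bounded: there is $\lambda_r>0$ with $\operatorname{argmin}_y\{r(y)+\frac1{2\lambda}\|x-y\|^2\}\ne\emptyset$ for all $x$ and $0<\lambda\le\lambda_r$. For each $j$ there is $L_j:\mathcal H_{-j}\to(0,\infty)$ such that $y\mapsto\nabla_jf(x_{-j};y)$ is $L_j(x_{-j})$-Lipschitz for every $x$; $\nabla f$ is Lipschitz on every bounded set. $\partial_L$ is the limiting subdifferential and $\operatorname{dist}(0,S)=\inf_{s\in S}\|s\|$. Delays: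 an integer $\tau\ge1$ and $d_k\in\{0,\dots,\tau\}^m$; $x^{k-d_k}:=(x_1^{k-d_{k,1}},\dots,x_m^{k-d_{k,m}})$, with $x^i_j=x^0_j$ for $i\le0$. Deterministic Asynchronous PALM: choose $x^0$, $c\in(0,1)$, $M>0$, indices $j_k\in\{1,\dots,m\}$; let $\rho_\tau:=\sup_{j,k}|\{h:k-\tau\le h\le k,\ j_h=j\}|$. For each $k$ set $\gamma^k_j=\min\{c(L_j(x^{k-d_k}_{-j})+2M\sqrt{\rho_\tau\tau})^{-1},\lambda_r\}$, choose $x^{k+1}_{j_k}\in\operatorname{argmin}_{u\in\mathcal H_{j_k}}\{r_{j_k}(u)+\langle\nabla_{j_k}f(x^{k-d_k}),u-x^k_{j_k}\rangle+\frac1{2\gamma^k_{j_k}}\|u-x^k_{j_k}\|^2\}$, and $x^{k+1}_j=x^k_j$ for $j\ne j_k$. (A1): there is $K\in\mathbb N$ with $\{1,\dots,m\}\subseteq\{j_{k+1},\dots,j_{k+K}\}$ for all $k$. (A2): there is $L>0$ with $L_j(x^{k-d_k}_{-j})\le L$ for all $j,k$. (A3): $\|\nabla_{j_k}f(x^k)-\nabla_{j_k}f(x^{k-d_k})\|\le M\|x^k-x^{k-d_k}\|$ for all $k$. Lyapunov function $\Phi:\mathcal H^{1+\tau}\to(-\infty,\infty]$: $\Phi(x(0),\dots,x(\tau))=f(x(0))+r(x(0))+\frac{M\sqrt{\rho_\tau}}{2\sqrt\tau}\sum_{h=1}^\tau(\tau-h+1)\|x(h)-x(h-1)\|^2$,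 and $z^k:=(x^k,x^{k-1},\dots,x^{k-\tau})$ with $x^i:=x^0$ for $i<0$. *)

theory Defs
  imports "HOL-Analysis.Analysis"
begin

text \<open>The product space H = H_1 x ... x H_m is modelled as real^'n whose coordinates
are partitioned into blocks by blk :: 'n => nat (values in {1..m}).
Block j of x is represented inside real^'n as its coordinate projection.\<close>

definition blockproj :: "('n \<Rightarrow> nat) \<Rightarrow> nat \<Rightarrow> real^'n \<Rightarrow> real^'n" where
  "blockproj blk j x = (\<chi> i. if blk i = j then x $ i else 0)"

definition block_space :: "('n \<Rightarrow> nat) \<Rightarrow> nat \<Rightarrow> (real^'n) set" where
  "block_space blk j = {x. \<forall>i. blk i \<noteq> j \<longrightarrow> x $ i = 0}"

definition blockrepl :: "('n \<Rightarrow> nat) \<Rightarrow> nat \<Rightarrow> real^'n \<Rightarrow> real^'n \<Rightarrow> real^'n" where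
  "blockrepl blk j x y = (\<chi> i. if blk i = j then y $ i else x $ i)"

text \<open>Delayed iterate x^{k-d_k}: block j is taken from x^{k - d k j}
  (natural subtraction truncates at 0, matching x^i = x^0 for i <= 0).\<close>
definition delayed :: "('n \<Rightarrow> nat) \<Rightarrow> (nat \<Rightarrow> real^'n) \<Rightarrow> (nat \<Rightarrow> nat \<Rightarrow> nat) \<Rightarrow> nat \<Rightarrow> real^'n" where
  "delayed blk x d k = (\<chi> i. x (k - d k (blk i)) $ i)"

definition rho_tau :: "(nat \<Rightarrow> nat) \<Rightarrow> nat \<Rightarrow> nat" where
  "rho_tau jk \<tau> = Sup {card {h. k - \<tau> \<le> h \<and> h \<le> k \<and> jk h = j} | j k. True}"

definition frechet_subdiff :: "('a::real_inner \<Rightarrow> ereal) \<Rightarrow> 'a \<Rightarrow> 'a set" where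
  "frechet_subdiff g x = {v. \<bar>g x\<bar> \<noteq> \<infinity> \<and>
     (\<forall>\<epsilon>>0. \<exists>\<delta>>0. \<forall>y. norm (y - x) < \<delta> \<longrightarrow>
        g x + ereal (inner v (y - x)) - ereal (\<epsilon> * norm (y - x)) \<le> g y)}"

definition limiting_subdiff :: "('a::real_inner \<Rightarrow> ereal) \<Rightarrow> 'a \<Rightarrow> 'a set" where
  "limiting_subdiff g x = {v. \<bar>g x\<bar> \<noteq> \<infinity> \<and>
     (\<exists>xs vs. xs \<longlonglongrightarrow> x \<and> (\<lambda>n. g (xs n)) \<longlonglongrightarrow> g x \<and>
        (\<forall>n. vs n \<in> frechet_subdiff g (xs n)) \<and> vs \<longlonglongrightarrow> v)}"

text \<open>dist(0,S) = inf_{s in S} norm s, with inf of the empty set = +infinity.\<close>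
definition dist0 :: "'a::real_normed_vector set \<Rightarrow> ereal" where
  "dist0 S = (INF s\<in>S. ereal (norm s))"

end

theory Submission
  imports Defs
begin

lemma frechet_main:
  fixes H :: "'a::real_inner \<Rightarrow> real" and R :: "'b::real_inner \<Rightarrow> ereal" and P :: "'a \<Rightarrow> 'b"
  assumes der: "(H has_derivative (\<lambda>h. inner G h)) (at w0)"
    and Pn: "\<forall>w. norm (P w - P w0) \<le> norm (w - w0)"
    and Pi: "\<forall>w. inner V (P w - P w0) = inner G' (w - w0)"
    and lb: "\<forall>y. R (P w0) + ereal (inner V (y - P w0) - \<mu> * (norm (y - P w0))\<^sup>2) \<le> R y"
    and R0: "R (P w0) = ereal R0" and mu: "\<mu> \<ge> 0"
  shows "G + G' \<in> frechet_subdiff (\<lambda>w. ereal (H w) + R (P w)) w0"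
  unfolding frechet_subdiff_def
proof (intro CollectI conjI allI impI)
  show "\<bar>ereal (H w0) + R (P w0)\<bar> \<noteq> \<infinity>" using R0 by simp
  fix \<epsilon> :: real assume e: "\<epsilon> > 0"
  obtain \<delta>1 where d1: "\<delta>1 > 0" and
    h1: "\<forall>y. norm (y - w0) < \<delta>1 \<longrightarrow> norm (H y - H w0 - inner G (y - w0)) \<le> \<epsilon>/2 * norm (y - w0)"
    using der e unfolding has_derivative_at_alt by (meson half_gt_zero)
  define \<delta> where "\<delta> = min \<delta>1 (\<epsilon> / (2 * (\<mu> + 1)))"
  have dpos: "\<delta> > 0" using d1 e mu by (simp add: \<delta>_def)
  show "\<exists>\<delta>>0. \<forall>y. norm (y - w0) < \<delta> \<longrightarrow>
          ereal (H w0) + R (P w0) + ereal (inner (G + G') (y - w0)) - ereal (\<epsilon> * norm (y - w0))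
          \<le> ereal (H y) + R (P y)"
  proof (intro exI[of _ \<delta>] conjI allI impI dpos)
    fix y assume y: "norm (y - w0) < \<delta>"
    let ?d = "norm (y - w0)"
    have a1: "\<bar>H y - H w0 - inner G (y - w0)\<bar> \<le> \<epsilon>/2 * ?d" using h1 y by (auto simp: \<delta>_def)
    have a2: "\<mu> * (norm (P y - P w0))\<^sup>2 \<le> \<mu> * ?d\<^sup>2"
      using Pn mu by (intro mult_left_mono power_mono) auto
    have "?d \<le> \<epsilon> / (2 * (\<mu> + 1))" using y by (simp add: \<delta>_def)
    hence "\<mu> * ?d * ?d \<le> \<mu> * ?d * (\<epsilon> / (2 * (\<mu> + 1)))" using mu by (intro mult_left_mono) auto
    also have "\<dots> \<le> \<epsilon>/2 * ?d"
    proof -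
      have "\<mu> / (\<mu> + 1) \<le> 1" using mu by simp
      hence "\<mu> * (\<epsilon> / (2 * (\<mu> + 1))) \<le> \<epsilon> / 2" using e mu
        by (simp add: field_simps)
      hence "(\<mu> * (\<epsilon> / (2 * (\<mu> + 1)))) * ?d \<le> (\<epsilon> / 2) * ?d" by (intro mult_right_mono) auto
      thus ?thesis by (simp add: algebra_simps)
    qed
    finally have a3: "\<mu> * ?d\<^sup>2 \<le> \<epsilon>/2 * ?d" by (simp add: power2_eq_square mult.assoc)
    have ineq: "H w0 + R0 + inner (G + G') (y - w0) - \<epsilon> * ?d
        \<le> H y + (R0 + (inner V (P y - P w0) - \<mu> * (norm (P y - P w0))\<^sup>2))"
    proof -
      have "H w0 + inner G (y - w0) - H y \<le> \<epsilon>/2 * ?d" using a1 by linarith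
      thus ?thesis using a2 a3 Pi[rule_format, of y] by (simp add: inner_add_left)
    qed
    have "ereal (H w0) + R (P w0) + ereal (inner (G + G') (y - w0)) - ereal (\<epsilon> * ?d)
        = ereal (H w0 + R0 + inner (G + G') (y - w0) - \<epsilon> * ?d)" using R0 by simp
    also have "\<dots> \<le> ereal (H y) + (R (P w0) + ereal (inner V (P y - P w0) - \<mu> * (norm (P y - P w0))\<^sup>2))"
      using ineq R0 by simp
    also have "\<dots> \<le> ereal (H y) + R (P y)" using lb by (intro add_left_mono) auto
    finally show "ereal (H w0) + R (P w0) + ereal (inner (G + G') (y - w0)) - ereal (\<epsilon> * ?d)
          \<le> ereal (H y) + R (P y)" .
  qed
qed

lemma frechet_limiting: "v \<in> frechet_subdiff g x \<Longrightarrow> v \<in> limiting_subdiff g x"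
  unfolding limiting_subdiff_def
  by (rule CollectI, rule conjI, simp add: frechet_subdiff_def,
      rule exI[of _ "\<lambda>n. x"], rule exI[of _ "\<lambda>n. v"], simp)

lemma dist0_le: "v \<in> S \<Longrightarrow> dist0 S \<le> ereal (norm v)"
  unfolding dist0_def by (rule INF_lower)

lemma ereal_sum_lb:
  assumes "finite J" "\<forall>j\<in>J. \<phi> j y0 = ereal (a j)" "\<forall>j\<in>J. \<phi> j y0 + ereal (b j) \<le> \<phi> j y"
  shows "ereal (\<Sum>j\<in>J. a j) + ereal (\<Sum>j\<in>J. b j) \<le> (\<Sum>j\<in>J. \<phi> j y)"
proof -
  have "ereal (\<Sum>j\<in>J. a j) + ereal (\<Sum>j\<in>J. b j) = (\<Sum>j\<in>J. ereal (a j + b j))"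
    by (simp add: sum.distrib)
  also have "\<dots> \<le> (\<Sum>j\<in>J. \<phi> j y)" using assms by (intro sum_mono) auto
  finally show ?thesis .
qed

lemma bp_in: "blockproj blk j y \<in> block_space blk j"
  by (simp add: blockproj_def block_space_def)

lemma bp_idem: "u \<in> block_space blk j \<Longrightarrow> blockproj blk j u = u"
  by (auto simp: blockproj_def block_space_def vec_eq_iff)

lemma bp_diff: "blockproj blk j (a - b) = blockproj blk j a - blockproj blk j b"
  by (simp add: blockproj_def vec_eq_iff)

lemma bp_add: "blockproj blk j (a + b) = blockproj blk j a + blockproj blk j b"
  by (simp add: blockproj_def vec_eq_iff)

lemma bp_scale: "blockproj blk j (t *\<^sub>R a) = t *\<^sub>R blockproj blk j a"
  by (simp add: blockproj_def vec_eq_iff)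

lemma bp_minus: "blockproj blk j (- a) = - blockproj blk j a"
  by (simp add: blockproj_def vec_eq_iff)

lemma bp_bp: "blockproj blk j (blockproj blk i y) = (if i = j then blockproj blk j y else 0)"
  by (auto simp: blockproj_def vec_eq_iff)

lemma bp_inner: "inner (blockproj blk j a) b = inner a (blockproj blk j b)"
  unfolding inner_vec_def blockproj_def by (intro sum.cong) auto

lemma bp_inner2: "u \<in> block_space blk j \<Longrightarrow> inner u b = inner u (blockproj blk j b)"
  using bp_inner[of blk j u b] bp_idem[of u blk j] by simp

lemma bp_norm: "norm (blockproj blk j y) \<le> norm y"
proof -
  have "(norm (blockproj blk j y))\<^sup>2 = inner (blockproj blk j y) (blockproj blk j y)"
    by (simp add: power2_norm_eq_inner)
  also have "\<dots> = inner (blockproj blk j y) y"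
    using bp_inner[of blk j "blockproj blk j y" y] by (simp add: bp_bp)
  also have "\<dots> \<le> norm (blockproj blk j y) * norm y" by (rule norm_cauchy_schwarz)
  finally have "norm (blockproj blk j y) * norm (blockproj blk j y) \<le> norm (blockproj blk j y) * norm y"
    by (simp add: power2_eq_square)
  thus ?thesis
    by (metis mult_le_cancel_left_pos norm_ge_zero order_le_less)
qed

lemma bp_decomp:
  assumes "finite J" "\<forall>i. blk i \<in> J"
  shows "y = (\<Sum>j\<in>J. blockproj blk j y)"
proof -
  have "(\<Sum>j\<in>J. blockproj blk j y) $ i = y $ i" for i
  proof -
    have "(\<Sum>j\<in>J. blockproj blk j y) $ i = (\<Sum>j\<in>J. if j = blk i then y $ i else 0)"
      by (simp add: blockproj_def eq_commute)
    also have "\<dots> = y $ i" using assms by (simp add: sum.delta)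
    finally show ?thesis .
  qed
  thus ?thesis by (simp add: vec_eq_iff)
qed

lemma norm_le_blocks:
  assumes "finite J" "\<forall>i. blk i \<in> J"
  shows "norm y \<le> (\<Sum>j\<in>J. norm (blockproj blk j y))"
  by (subst bp_decomp[OF assms, of y]) (rule norm_sum)

lemma prox_lb:
  fixes \<phi> :: "'a::real_inner \<Rightarrow> ereal"
  assumes opt: "\<phi> p + ereal (inner g (p - a) + c2 * (norm (p - a))\<^sup>2) \<le> \<phi> u + ereal (inner g (u - a) + c2 * (norm (u - a))\<^sup>2)"
    and fin: "\<phi> p = ereal P0" and c2: "c2 \<le> \<mu>"
  shows "\<phi> p + ereal (inner (- g - (2 * c2) *\<^sub>R (p - a)) (u - p) - \<mu> * (norm (u - p))\<^sup>2) \<le> \<phi> u"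
proof (cases "\<phi> u")
  case (real U)
  have id: "(norm (u - a))\<^sup>2 = (norm (u - p))\<^sup>2 + 2 * inner (u - p) (p - a) + (norm (p - a))\<^sup>2"
  proof -
    have "u - a = (u - p) + (p - a)" by simp
    hence "(norm (u - a))\<^sup>2 = (norm ((u - p) + (p - a)))\<^sup>2" by simp
    also have "\<dots> = (norm (u - p))\<^sup>2 + 2 * inner (u - p) (p - a) + (norm (p - a))\<^sup>2"
      using dot_norm[of "u - p" "p - a"] by simp
    finally show ?thesis .
  qed
  have ig: "inner g (u - a) = inner g (u - p) + inner g (p - a)"
    by (metis diff_add_cancel inner_add_right add_diff_eq)
  have "c2 * (norm (u - p))\<^sup>2 \<le> \<mu> * (norm (u - p))\<^sup>2" using c2 by (intro mult_right_mono) auto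
  moreover have "P0 + (inner g (p - a) + c2 * (norm (p - a))\<^sup>2) \<le> U + (inner g (u - a) + c2 * (norm (u - a))\<^sup>2)"
    using opt fin real by simp
  moreover have "P0 + (inner (- g - (2 * c2) *\<^sub>R (p - a)) (u - p) - \<mu> * (norm (u - p))\<^sup>2) \<le> U"
  proof -
    have e1: "inner (- g - (2 * c2) *\<^sub>R (p - a)) (u - p) = - inner g (u - p) - (2 * c2) * inner (u - p) (p - a)"
    proof -
      have gen: "inner (- g - t *\<^sub>R v) w = - inner g w - t * inner v w" for t v w
        by (simp add: inner_diff_left)
      show ?thesis using gen[of "2 * c2" "p - a" "u - p"] inner_commute[of "p - a" "u - p"] by simp
    qed
    have e2: "c2 * (norm (u - a))\<^sup>2 = c2 * (norm (u - p))\<^sup>2 + 2 * c2 * inner (u - p) (p - a) + c2 * (norm (p - a))\<^sup>2"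
    proof -
      have g2: "c2 * (A + 2 * B + C) = c2 * A + 2 * c2 * B + c2 * C" for A B C :: real
        by (simp add: algebra_simps)
      show ?thesis unfolding id by (rule g2)
    qed
    show ?thesis using id ig e1 e2 calculation by linarith
  qed
  ultimately show ?thesis using fin real by simp
next
  case PInf thus ?thesis by simp
next
  case MInf thus ?thesis using opt fin by simp
qed

lemma tele_norm:
  fixes x :: "nat \<Rightarrow> 'a::real_normed_vector"
  shows "a \<le> b \<Longrightarrow> norm (x b - x a) \<le> (\<Sum>h\<in>{a..<b}. norm (x (Suc h) - x h))"
proof (induction b)
  case 0 thus ?case by simp
next
  case (Suc b)
  show ?case
  proof (cases "a = Suc b")
    case True thus ?thesis by simp
  next
    case False
    hence ab: "a \<le> b" using Suc by simp
    have "norm (x (Suc b) - x a) \<le> norm (x (Suc b) - x b) + norm (x b - x a)"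
      by (metis diff_add_cancel add_diff_eq norm_triangle_ineq)
    also have "\<dots> \<le> norm (x (Suc b) - x b) + (\<Sum>h\<in>{a..<b}. norm (x (Suc h) - x h))"
      using Suc.IH ab by simp
    also have "\<dots> = (\<Sum>h\<in>{a..<Suc b}. norm (x (Suc h) - x h))" using ab by simp
    finally show ?thesis .
  qed
qed

lemma last_update:
  assumes so: "\<forall>k. \<forall>j. j \<noteq> jk k \<longrightarrow> blockproj blk j (x (Suc k)) = blockproj blk j (x k)"
  shows "h0 \<le> k \<Longrightarrow> jk h0 = j \<Longrightarrow> \<exists>h. h0 \<le> h \<and> h \<le> k \<and> jk h = j \<and>
            blockproj blk j (x (Suc k)) = blockproj blk j (x (Suc h))"
proof (induction k)
  case 0 thus ?case by auto
next
  case (Suc k)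
  show ?case
  proof (cases "jk (Suc k) = j")
    case True thus ?thesis using Suc.prems by auto
  next
    case False
    hence "h0 \<le> k" using Suc.prems by (metis le_SucE)
    then obtain h where "h0 \<le> h \<and> h \<le> k \<and> jk h = j \<and>
            blockproj blk j (x (Suc k)) = blockproj blk j (x (Suc h))" using Suc by blast
    thus ?thesis using so False by (metis le_SucI)
  qed
qed


lemma vecnth_der: "((\<lambda>w::'a::real_normed_vector^'t. w $ i) has_derivative (\<lambda>v. v $ i)) (at w)"
  by (rule bounded_linear_imp_has_derivative) (rule bounded_linear_vec_nth)

lemma Q_deriv:
  fixes w :: "real^'n^'t" and a :: "nat \<Rightarrow> real" and e :: "nat \<Rightarrow> 't"
  shows "((\<lambda>w. \<Sum>h\<in>A. a h * (norm (w $ e h - w $ e (h - 1)))\<^sup>2) has_derivative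
     (\<lambda>v. inner (\<Sum>h\<in>A. (2 * a h) *\<^sub>R (axis (e h) (w $ e h - w $ e (h - 1)) - axis (e (h - 1)) (w $ e h - w $ e (h - 1)))) v)) (at w)"
proof -
  have each: "((\<lambda>w. a h * (norm (w $ e h - w $ e (h - 1)))\<^sup>2) has_derivative
     (\<lambda>v. inner ((2 * a h) *\<^sub>R (axis (e h) (w $ e h - w $ e (h - 1)) - axis (e (h - 1)) (w $ e h - w $ e (h - 1)))) v)) (at w)" for h
  proof -
    let ?L = "\<lambda>w::real^'n^'t. w $ e h - w $ e (h - 1)"
    have dL: "(?L has_derivative ?L) (at w)"
      by (intro has_derivative_diff vecnth_der)
    have dI: "((\<lambda>w. inner (?L w) (?L w)) has_derivative (\<lambda>v. inner (?L w) (?L v) + inner (?L v) (?L w))) (at w)"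
      by (rule has_derivative_inner[OF dL dL])
    have dM: "((\<lambda>w. a h * inner (?L w) (?L w)) has_derivative (\<lambda>v. a h * (inner (?L w) (?L v) + inner (?L v) (?L w)))) (at w)"
      by (rule has_derivative_mult_right[OF dI])
    show ?thesis
    proof (rule has_derivative_eq_rhs)
      show "((\<lambda>w. a h * (norm (?L w))\<^sup>2) has_derivative (\<lambda>v. a h * (inner (?L w) (?L v) + inner (?L v) (?L w)))) (at w)"
        using dM by (simp add: power2_norm_eq_inner)
      show "(\<lambda>v. a h * (inner (?L w) (?L v) + inner (?L v) (?L w))) =
          (\<lambda>v. inner ((2 * a h) *\<^sub>R (axis (e h) (?L w) - axis (e (h - 1)) (?L w))) v)"
      proof (rule ext)
        fix v :: "real^'n^'t"
        have 1: "inner ((2 * a h) *\<^sub>R (axis (e h) (?L w) - axis (e (h - 1)) (?L w))) v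
            = (2 * a h) * (inner (?L w) (v $ e h) - inner (?L w) (v $ e (h - 1)))"
          by (simp only: inner_scaleR_left inner_diff_left inner_axis')
        have 2: "inner (?L v) (?L w) = inner (?L w) (?L v)" by (rule inner_commute)
        have 3: "inner (?L w) (?L v) = inner (?L w) (v $ e h) - inner (?L w) (v $ e (h - 1))"
          by (rule inner_diff_right)
        show "a h * (inner (?L w) (?L v) + inner (?L v) (?L w)) =
          inner ((2 * a h) *\<^sub>R (axis (e h) (?L w) - axis (e (h - 1)) (?L w))) v"
          unfolding 1 2 3 by (simp add: algebra_simps)
      qed
    qed
  qed
  show ?thesis
    by (rule has_derivative_eq_rhs[OF has_derivative_sum[OF each]])
       (simp add: inner_sum_left fun_eq_iff)
qed

lemma norm_axis: "norm (axis i (u::'a::real_inner)) = norm u"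
  by (simp add: norm_eq_sqrt_inner inner_axis_axis)


theorem mainTheorem7:
  fixes m :: nat and blk :: "'n::finite \<Rightarrow> nat"
    and f :: "real^'n \<Rightarrow> real" and gradf :: "real^'n \<Rightarrow> real^'n"
    and rj :: "nat \<Rightarrow> real^'n \<Rightarrow> ereal"
    and r Psi :: "real^'n \<Rightarrow> ereal"
    and lam_r :: real and Lj :: "nat \<Rightarrow> real^'n \<Rightarrow> real"
    and \<tau> :: nat and d :: "nat \<Rightarrow> nat \<Rightarrow> nat"
    and x :: "nat \<Rightarrow> real^'n" and c M :: real and jk :: "nat \<Rightarrow> nat"
    and K :: nat and L :: real
    and e :: "nat \<Rightarrow> 't::finite"
    and Phi :: "real^'n^'t \<Rightarrow> ereal" and z :: "nat \<Rightarrow> real^'n^'t"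
  assumes blk_range: "\<forall>i. blk i \<in> {1..m}"
    (* f is C^1 with gradient gradf *)
    and f_grad: "\<forall>y. (f has_derivative (\<lambda>h. inner (gradf y) h)) (at y)"
    and gradf_cont: "continuous_on UNIV gradf"
    (* r_j proper lsc on H_j *)
    and rj_proper: "\<forall>j\<in>{1..m}. (\<forall>y\<in>block_space blk j. rj j y \<noteq> -\<infinity>)
                      \<and> (\<exists>y\<in>block_space blk j. rj j y \<noteq> \<infinity>)"
    and rj_lsc: "\<forall>j\<in>{1..m}. \<forall>y\<in>block_space blk j. \<forall>ys.
                    (\<forall>n. ys n \<in> block_space blk j) \<longrightarrow> ys \<longlonglongrightarrow> y \<longrightarrow>
                    rj j y \<le> liminf (\<lambda>n. rj j (ys n))"
    and r_def: "r = (\<lambda>y. \<Sum>j\<in>{1..m}. rj j (blockproj blk j y))"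
    and Psi_def: "Psi = (\<lambda>y. ereal (f y) + r y)"
    and Psi_bdd: "\<exists>b::real. \<forall>y. ereal b \<le> Psi y"
    (* prox-boundedness *)
    and lr_pos: "lam_r > 0"
    and prox_bdd: "\<forall>y. \<forall>lam. 0 < lam \<and> lam \<le> lam_r \<longrightarrow>
        (\<exists>w. \<forall>w'. r w + ereal (1 / (2 * lam) * (norm (y - w))\<^sup>2)
                    \<le> r w' + ereal (1 / (2 * lam) * (norm (y - w'))\<^sup>2))"
    (* block Lipschitz gradients, L_j depending only on x_{-j} *)
    and Lj_pos: "\<forall>j\<in>{1..m}. \<forall>y. Lj j y > 0"
    and Lj_dep: "\<forall>j\<in>{1..m}. \<forall>y y'. (\<forall>i. blk i \<noteq> j \<longrightarrow> y $ i = y' $ i) \<longrightarrow> Lj j y = Lj j y'"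
    and Lj_lip: "\<forall>j\<in>{1..m}. \<forall>y u u'. u \<in> block_space blk j \<longrightarrow> u' \<in> block_space blk j \<longrightarrow>
        norm (blockproj blk j (gradf (blockrepl blk j y u)) - blockproj blk j (gradf (blockrepl blk j y u')))
          \<le> Lj j y * norm (u - u')"
    and gradf_loclip: "\<forall>S. bounded S \<longrightarrow> (\<exists>\<Lambda>. \<forall>y\<in>S. \<forall>y'\<in>S. norm (gradf y - gradf y') \<le> \<Lambda> * norm (y - y'))"
    (* delays *)
    and tau_ge: "\<tau> \<ge> 1"
    and d_le: "\<forall>k j. d k j \<le> \<tau>"
    (* the algorithm *)
    and c_range: "0 < c" "c < 1"
    and M_pos: "M > 0"
    and jk_range: "\<forall>k. jk k \<in> {1..m}"
    and step_min: "\<forall>k. \<forall>u\<in>block_space blk (jk k).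
        (let j = jk k; xd = delayed blk x d k; xkj = blockproj blk j (x k);
             \<gamma> = min (c / (Lj j xd + 2 * M * sqrt (real (rho_tau jk \<tau>) * real \<tau>))) lam_r;
             obj = (\<lambda>v. rj j v + ereal (inner (blockproj blk j (gradf xd)) (v - xkj)
                                        + 1 / (2 * \<gamma>) * (norm (v - xkj))\<^sup>2))
         in obj (blockproj blk j (x (Suc k))) \<le> obj u)"
    and step_other: "\<forall>k. \<forall>j. j \<noteq> jk k \<longrightarrow> blockproj blk j (x (Suc k)) = blockproj blk j (x k)"
    (* (A1), (A2), (A3) *)
    and A1: "\<forall>k. {1..m} \<subseteq> jk ` {k + 1..k + K}"
    and A2: "L > 0" "\<forall>j\<in>{1..m}. \<forall>k. Lj j (delayed blk x d k) \<le> L"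
    and A3: "\<forall>k. norm (blockproj blk (jk k) (gradf (x k)) - blockproj blk (jk k) (gradf (delayed blk x d k)))
                 \<le> M * norm (x k - delayed blk x d k)"
    (* bounded iterates *)
    and x_bdd: "bounded (range x)"
    (* Lyapunov function on H^{1+tau}, components indexed 0..tau via the bijection e *)
    and e_bij: "bij_betw e {0..\<tau>} UNIV"
    and Phi_def: "Phi = (\<lambda>w. Psi (w $ e 0) + ereal (M * sqrt (real (rho_tau jk \<tau>)) / (2 * sqrt (real \<tau>))
                    * (\<Sum>h=1..\<tau>. real (\<tau> - h + 1) * (norm (w $ e h - w $ e (h - 1)))\<^sup>2)))"
    and z_def: "\<forall>k. \<forall>h\<in>{0..\<tau>}. z k $ e h = x (k - h)"
  shows "\<exists>c0>0. \<exists>k'. \<forall>k\<ge>k'.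
           dist0 (limiting_subdiff Phi (z (Suc k))) \<le> ereal (c0 * (\<Sum>h=k-\<tau>-K..k. norm (x (Suc h) - x h)))
         \<and> dist0 (limiting_subdiff Psi (x (Suc k))) \<le> ereal (c0 * (\<Sum>h=k-\<tau>-K..k. norm (x (Suc h) - x h)))"
proof -
  let ?bp = "blockproj blk"
  define J where "J = {1..m}"
  have finJ: "finite J" by (simp add: J_def)
  have blkJ: "\<forall>i. blk i \<in> J" using blk_range by (simp add: J_def)
  have cardJ: "card J = m" by (simp add: J_def)
  define \<rho> where "\<rho> = real (rho_tau jk \<tau>)"
  define D where "D = L + 2 * M * sqrt (\<rho> * real \<tau>)"
  have sq0: "sqrt (\<rho> * real \<tau>) \<ge> 0" by (simp add: \<rho>_def)
  have Dpos: "D > 0" using A2(1) M_pos sq0 by (simp add: D_def add_pos_nonneg)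
  define gm where "gm = min (c / D) lam_r"
  have gmpos: "gm > 0" using c_range Dpos lr_pos by (simp add: gm_def)
  define \<mu> where "\<mu> = 1 / (2 * gm)"
  have mupos: "\<mu> > 0" using gmpos by (simp add: \<mu>_def)
  define \<gamma> where "\<gamma> = (\<lambda>h. min (c / (Lj (jk h) (delayed blk x d h) + 2 * M * sqrt (\<rho> * real \<tau>))) lam_r)"
  have gam: "\<gamma> h > 0 \<and> gm \<le> \<gamma> h" for h
  proof -
    have j: "jk h \<in> {1..m}" using jk_range by auto
    let ?den = "Lj (jk h) (delayed blk x d h) + 2 * M * sqrt (\<rho> * real \<tau>)"
    have dp: "?den > 0" using Lj_pos j M_pos sq0 by (simp add: add_pos_nonneg)
    have dl: "?den \<le> D" using A2(2) j by (simp add: D_def)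
    have "c / D \<le> c / ?den" using c_range dp dl by (intro divide_left_mono) auto
    thus ?thesis using dp c_range lr_pos by (auto simp: \<gamma>_def gm_def)
  qed
  have invg: "1 / \<gamma> h \<le> 1 / gm" for h using gam[of h] gmpos by (simp add: divide_left_mono frac_le)
  define V where "V = (\<lambda>h. ?bp (jk h) (- gradf (delayed blk x d h) - (1 / \<gamma> h) *\<^sub>R (x (Suc h) - x h)))"
  have fin: "\<exists>P0. rj (jk h) (?bp (jk h) (x (Suc h))) = ereal P0" for h
  proof -
    let ?j = "jk h"
    have j: "?j \<in> {1..m}" using jk_range by auto
    obtain u0 where u0: "u0 \<in> block_space blk ?j" "rj ?j u0 \<noteq> \<infinity>" using rj_proper j by blast
    have "rj ?j (?bp ?j (x (Suc h))) \<noteq> -\<infinity>" using rj_proper j bp_in by blast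
    moreover have "rj ?j (?bp ?j (x (Suc h))) \<noteq> \<infinity>"
    proof
      assume inf: "rj ?j (?bp ?j (x (Suc h))) = \<infinity>"
      have "rj ?j (?bp ?j (x (Suc h))) + ereal (inner (?bp ?j (gradf (delayed blk x d h))) (?bp ?j (x (Suc h)) - ?bp ?j (x h))
              + 1 / (2 * \<gamma> h) * (norm (?bp ?j (x (Suc h)) - ?bp ?j (x h)))\<^sup>2)
            \<le> rj ?j u0 + ereal (inner (?bp ?j (gradf (delayed blk x d h))) (u0 - ?bp ?j (x h))
              + 1 / (2 * \<gamma> h) * (norm (u0 - ?bp ?j (x h)))\<^sup>2)"
        using step_min u0(1) by (auto simp: Let_def \<gamma>_def \<rho>_def)
      thus False using inf u0(2) by auto
    qed
    ultimately show ?thesis by (cases "rj ?j (?bp ?j (x (Suc h)))") auto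
  qed
  have prox: "rj (jk h) (?bp (jk h) (x (Suc h))) + ereal (inner (V h) (u - ?bp (jk h) (x (Suc h)))
        - \<mu> * (norm (u - ?bp (jk h) (x (Suc h))))\<^sup>2) \<le> rj (jk h) u"
    if u: "u \<in> block_space blk (jk h)" for h u
  proof -
    let ?j = "jk h"
    obtain P0 where P0: "rj ?j (?bp ?j (x (Suc h))) = ereal P0" using fin by blast
    have opt: "rj ?j (?bp ?j (x (Suc h))) + ereal (inner (?bp ?j (gradf (delayed blk x d h))) (?bp ?j (x (Suc h)) - ?bp ?j (x h))
              + 1 / (2 * \<gamma> h) * (norm (?bp ?j (x (Suc h)) - ?bp ?j (x h)))\<^sup>2)
            \<le> rj ?j u + ereal (inner (?bp ?j (gradf (delayed blk x d h))) (u - ?bp ?j (x h))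
              + 1 / (2 * \<gamma> h) * (norm (u - ?bp ?j (x h)))\<^sup>2)"
      using step_min u by (auto simp: Let_def \<gamma>_def \<rho>_def)
    have c2: "1 / (2 * \<gamma> h) \<le> \<mu>" using invg[of h] gam[of h] gmpos by (simp add: \<mu>_def)
    have Veq: "V h = - ?bp ?j (gradf (delayed blk x d h)) - (2 * (1 / (2 * \<gamma> h))) *\<^sub>R (?bp ?j (x (Suc h)) - ?bp ?j (x h))"
      using gam[of h] by (simp add: V_def bp_diff bp_minus bp_scale)
    show ?thesis unfolding Veq by (rule prox_lb[OF opt P0 c2])
  qed
  obtain R where R: "\<forall>k. norm (x k) \<le> R" using x_bdd unfolding bounded_iff by auto
  have R0: "R \<ge> 0" using R norm_ge_zero order_trans by blast
  let ?N = "real CARD('n)"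
  have dbd: "norm (delayed blk x d h) \<le> ?N * R" for h
  proof -
    have "norm (delayed blk x d h) \<le> (\<Sum>i\<in>UNIV. \<bar>delayed blk x d h $ i\<bar>)" by (rule norm_le_l1_cart)
    also have "\<dots> \<le> (\<Sum>i\<in>(UNIV::'n set). R)"
    proof (rule sum_mono)
      fix i
      have "\<bar>delayed blk x d h $ i\<bar> = \<bar>x (h - d h (blk i)) $ i\<bar>" by (simp add: delayed_def)
      also have "\<dots> \<le> R" using component_le_norm_cart R order_trans by blast
      finally show "\<bar>delayed blk x d h $ i\<bar> \<le> R" .
    qed
    finally show ?thesis by simp
  qed
  define B where "B = cball (0::real^'n) (R + ?N * R)"
  have NR: "0 \<le> ?N * R" using R0 by simp
  have xB: "x k \<in> B" for k
  proof -
    have "norm (x k) \<le> R + ?N * R" using R[rule_format, of k] NR by linarith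
    thus ?thesis by (simp add: B_def)
  qed
  have dB: "delayed blk x d h \<in> B" for h using dbd[of h] R0 by (simp add: B_def)
  obtain \<Lambda> where Lam: "\<forall>y\<in>B. \<forall>y'\<in>B. norm (gradf y - gradf y') \<le> \<Lambda> * norm (y - y')"
    using gradf_loclip by (metis B_def bounded_cball)
  define \<Lambda>' where "\<Lambda>' = \<bar>\<Lambda>\<bar>"
  have Lam': "norm (gradf y - gradf y') \<le> \<Lambda>' * norm (y - y')" if "y \<in> B" "y' \<in> B" for y y'
  proof -
    have "\<Lambda> * norm (y - y') \<le> \<Lambda>' * norm (y - y')" by (simp add: \<Lambda>'_def mult_right_mono)
    thus ?thesis using Lam that by fastforce
  qed
  define Cq where "Cq = M * sqrt \<rho> / (2 * sqrt (real \<tau>))"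
  define c1 where "c1 = real m * (\<Lambda>' * ?N + 1 / gm)"
  define c0 where "c0 = c1 + \<bar>Cq\<bar> * (4 * real \<tau>) + 1"
  have c1nn: "c1 \<ge> 0" using gmpos by (simp add: c1_def \<Lambda>'_def)
  have "\<bar>Cq\<bar> * (4 * real \<tau>) \<ge> 0" by simp
  hence c0pos: "c0 > 0" using c1nn unfolding c0_def by linarith
  show ?thesis
  proof (rule exI[of _ c0], rule conjI[OF c0pos], rule exI[of _ "K + \<tau>"], intro allI impI)
    fix k assume kge: "k \<ge> K + \<tau>"
    define S where "S = (\<Sum>h=k-\<tau>-K..k. norm (x (Suc h) - x h))"
    have Snn: "S \<ge> 0" by (simp add: S_def sum_nonneg)
    have inS: "norm (x (Suc h) - x h) \<le> S" if "k - \<tau> - K \<le> h" "h \<le> k" for h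
      unfolding S_def by (rule member_le_sum) (use that in auto)
    have teleS: "norm (x (Suc k) - x a) \<le> S" if "k - \<tau> - K \<le> a" "a \<le> Suc k" for a
    proof -
      have "norm (x (Suc k) - x a) \<le> (\<Sum>h\<in>{a..<Suc k}. norm (x (Suc h) - x h))"
        using tele_norm that(2) by blast
      also have "\<dots> \<le> S" unfolding S_def using that(1)
        by (intro sum_mono2) auto
      finally show ?thesis .
    qed
    have main: "dist0 (limiting_subdiff Phi (z (Suc k))) \<le> ereal (c0 * S) \<and>
          dist0 (limiting_subdiff Psi (x (Suc k))) \<le> ereal (c0 * S)"
    proof -
      have ex: "\<exists>h. k + 1 - K \<le> h \<and> h \<le> k \<and> jk h = j \<and> ?bp j (x (Suc k)) = ?bp j (x (Suc h))"
        if j: "j \<in> J" for j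
      proof -
        have kK: "k - K + K = k" using kge by simp
        have "J \<subseteq> jk ` {k - K + 1..k}" using A1[rule_format, of "k - K"] kK by (simp add: J_def)
        then obtain h0 where h0: "h0 \<in> {k - K + 1..k}" "jk h0 = j" using j by blast
        obtain h where "h0 \<le> h \<and> h \<le> k \<and> jk h = j \<and> ?bp j (x (Suc k)) = ?bp j (x (Suc h))"
          using last_update[OF step_other, of h0 k j] h0 by auto
        thus ?thesis using h0(1) kge by (intro exI[of _ h]) auto
      qed
      obtain hh where hh: "\<forall>j\<in>J. k + 1 - K \<le> hh j \<and> hh j \<le> k \<and> jk (hh j) = j \<and> ?bp j (x (Suc k)) = ?bp j (x (Suc (hh j)))"
        using ex by metis
      define y0 where "y0 = x (Suc k)"
      define W0 where "W0 = (\<Sum>j\<in>J. V (hh j))"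
      define a where "a = (\<lambda>j. real_of_ereal (rj j (?bp j y0)))"
      have aeq: "rj j (?bp j y0) = ereal (a j)" if "j \<in> J" for j
      proof -
        obtain P0 where "rj (jk (hh j)) (?bp (jk (hh j)) (x (Suc (hh j)))) = ereal P0" using fin by blast
        thus ?thesis using hh that by (simp add: a_def y0_def)
      qed
      have rlb_j: "rj j (?bp j y0) + ereal (inner (V (hh j)) (y - y0) - \<mu> * (norm (y - y0))\<^sup>2) \<le> rj j (?bp j y)"
        if j: "j \<in> J" for j y
      proof -
        let ?h = "hh j"
        have jh: "jk ?h = j" and p: "?bp j y0 = ?bp j (x (Suc ?h))" using hh j by (auto simp: y0_def)
        have pr: "rj j (?bp j y0) + ereal (inner (V ?h) (?bp j y - ?bp j y0) - \<mu> * (norm (?bp j y - ?bp j y0))\<^sup>2)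
            \<le> rj j (?bp j y)"
          using prox[of "?bp j y" ?h] bp_in[of blk j y] jh p by simp
        have i1: "inner (V ?h) (?bp j y - ?bp j y0) = inner (V ?h) (y - y0)"
        proof -
          obtain s where s: "V ?h = ?bp j s" using jh by (simp add: V_def)
          show ?thesis unfolding s bp_inner bp_diff[symmetric] bp_bp by simp
        qed
        have n1: "norm (?bp j y - ?bp j y0) \<le> norm (y - y0)"
          unfolding bp_diff[symmetric] by (rule bp_norm)
        have "\<mu> * (norm (?bp j y - ?bp j y0))\<^sup>2 \<le> \<mu> * (norm (y - y0))\<^sup>2"
          using n1 mupos by (intro mult_left_mono power_mono) auto
        hence "ereal (inner (V (hh j)) (y - y0) - \<mu> * (norm (y - y0))\<^sup>2)
            \<le> ereal (inner (V ?h) (?bp j y - ?bp j y0) - \<mu> * (norm (?bp j y - ?bp j y0))\<^sup>2)"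
          using i1 by simp
        hence "rj j (?bp j y0) + ereal (inner (V (hh j)) (y - y0) - \<mu> * (norm (y - y0))\<^sup>2)
            \<le> rj j (?bp j y0) + ereal (inner (V ?h) (?bp j y - ?bp j y0) - \<mu> * (norm (?bp j y - ?bp j y0))\<^sup>2)"
          by (rule add_left_mono)
        thus ?thesis using pr by (rule order_trans)
      qed
      have rdef: "r w = (\<Sum>j\<in>J. rj j (?bp j w))" for w by (simp add: r_def J_def)
      have ry0: "r y0 = ereal (\<Sum>j\<in>J. a j)" using aeq by (simp add: rdef)
      have rlb: "r y0 + ereal (inner W0 (y - y0) - (real m * \<mu>) * (norm (y - y0))\<^sup>2) \<le> r y" for y
      proof -
        have "ereal (\<Sum>j\<in>J. a j) + ereal (\<Sum>j\<in>J. inner (V (hh j)) (y - y0) - \<mu> * (norm (y - y0))\<^sup>2) \<le> (\<Sum>j\<in>J. rj j (?bp j y))"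
          by (rule ereal_sum_lb[OF finJ]) (use aeq rlb_j in auto)
        moreover have "(\<Sum>j\<in>J. inner (V (hh j)) (y - y0) - \<mu> * (norm (y - y0))\<^sup>2) = inner W0 (y - y0) - (real m * \<mu>) * (norm (y - y0))\<^sup>2"
          by (simp add: W0_def sum_subtractf inner_sum_left cardJ)
        ultimately show ?thesis using ry0 rdef by simp
      qed
      have PsiF: "gradf y0 + W0 \<in> frechet_subdiff Psi y0"
      proof -
        have l1: "\<forall>w. norm ((\<lambda>w. w) w - (\<lambda>w. w) y0) \<le> norm (w - y0)" by simp
        have l2: "\<forall>w. inner W0 ((\<lambda>w. w) w - (\<lambda>w. w) y0) = inner W0 (w - y0)" by simp
        have l3: "\<forall>y. r ((\<lambda>w. w) y0) + ereal (inner W0 (y - (\<lambda>w. w) y0) - (real m * \<mu>) * (norm (y - (\<lambda>w. w) y0))\<^sup>2) \<le> r y"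
          using rlb by simp
        have l4: "r ((\<lambda>w. w) y0) = ereal (\<Sum>j\<in>J. a j)" using ry0 by simp
        have l5: "real m * \<mu> \<ge> 0" using mupos by simp
        have "gradf y0 + W0 \<in> frechet_subdiff (\<lambda>w. ereal (f w) + r ((\<lambda>w. w) w)) y0"
          by (rule frechet_main[OF f_grad[rule_format, of y0] l1 l2 l3 l4 l5])
        thus ?thesis by (simp add: Psi_def)
      qed
      have Wb: "norm (gradf y0 + W0) \<le> c1 * S"
      proof -
        have blk_b: "norm (?bp j (gradf y0 + W0)) \<le> (\<Lambda>' * ?N + 1 / gm) * S" if j: "j \<in> J" for j
        proof -
          let ?h = "hh j"
          have hj: "k + 1 - K \<le> ?h" "?h \<le> k" "jk ?h = j" using hh j by auto
          have Vi: "V (hh i) = ?bp i (- gradf (delayed blk x d (hh i)) - (1 / \<gamma> (hh i)) *\<^sub>R (x (Suc (hh i)) - x (hh i)))"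
            if "i \<in> J" for i using hh that by (simp add: V_def)
          have "?bp j W0 = (\<Sum>i\<in>J. ?bp j (V (hh i)))"
            unfolding W0_def by (induction J rule: infinite_finite_induct) (auto simp: bp_add blockproj_def vec_eq_iff)
          also have "\<dots> = (\<Sum>i\<in>J. if i = j then V (hh j) else 0)"
          proof (intro sum.cong refl)
            fix i assume i: "i \<in> J"
            obtain s where s: "V (hh i) = ?bp i s" using Vi[OF i] by blast
            show "?bp j (V (hh i)) = (if i = j then V (hh j) else 0)"
              using s by (cases "i = j") (simp_all add: bp_bp)
          qed
          also have "\<dots> = V (hh j)" using j finJ by (simp add: sum.delta)
          finally have bW: "?bp j W0 = V ?h" .
          let ?xd = "delayed blk x d ?h"
          have eq: "?bp j (gradf y0 + W0) = ?bp j (gradf y0 - gradf ?xd - (1 / \<gamma> ?h) *\<^sub>R (x (Suc ?h) - x ?h))"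
          proof -
            have "?bp j (gradf y0 + W0) = ?bp j (gradf y0) + ?bp j (- gradf ?xd - (1 / \<gamma> ?h) *\<^sub>R (x (Suc ?h) - x ?h))"
              using bW hj(3) by (simp only: bp_add V_def)
            also have "\<dots> = ?bp j (gradf y0 + (- gradf ?xd - (1 / \<gamma> ?h) *\<^sub>R (x (Suc ?h) - x ?h)))"
              by (simp only: bp_add)
            also have "gradf y0 + (- gradf ?xd - (1 / \<gamma> ?h) *\<^sub>R (x (Suc ?h) - x ?h)) = gradf y0 - gradf ?xd - (1 / \<gamma> ?h) *\<^sub>R (x (Suc ?h) - x ?h)"
              by (simp add: algebra_simps)
            finally show ?thesis .
          qed
          have "norm (?bp j (gradf y0 + W0)) \<le> norm (gradf y0 - gradf ?xd - (1 / \<gamma> ?h) *\<^sub>R (x (Suc ?h) - x ?h))"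
            unfolding eq by (rule bp_norm)
          also have "\<dots> \<le> norm (gradf y0 - gradf ?xd) + (1 / \<gamma> ?h) * norm (x (Suc ?h) - x ?h)"
          proof -
            have t: "1 / \<gamma> ?h \<ge> 0" using gam[of ?h] by simp
            have "norm (gradf y0 - gradf ?xd - (1 / \<gamma> ?h) *\<^sub>R (x (Suc ?h) - x ?h)) \<le> norm (gradf y0 - gradf ?xd) + norm ((1 / \<gamma> ?h) *\<^sub>R (x (Suc ?h) - x ?h))"
              by (rule norm_triangle_ineq4)
            also have "norm ((1 / \<gamma> ?h) *\<^sub>R (x (Suc ?h) - x ?h)) = (1 / \<gamma> ?h) * norm (x (Suc ?h) - x ?h)"
              using t by simp
            finally show ?thesis .
          qed
          also have "\<dots> \<le> \<Lambda>' * ?N * S + (1 / gm) * S"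
          proof (rule add_mono)
            have dn: "norm (y0 - ?xd) \<le> ?N * S"
            proof -
              have "norm (y0 - ?xd) \<le> (\<Sum>i\<in>UNIV. \<bar>(y0 - ?xd) $ i\<bar>)" by (rule norm_le_l1_cart)
              also have "\<dots> \<le> (\<Sum>i\<in>(UNIV::'n set). S)"
              proof (rule sum_mono)
                fix i
                let ?a = "?h - d ?h (blk i)"
                have "\<bar>(y0 - ?xd) $ i\<bar> = \<bar>(x (Suc k) - x ?a) $ i\<bar>" by (simp add: y0_def delayed_def)
                also have "\<dots> \<le> norm (x (Suc k) - x ?a)" by (rule component_le_norm_cart)
                also have "\<dots> \<le> S"
                proof (rule teleS)
                  show "k - \<tau> - K \<le> ?a" using hj d_le[rule_format, of ?h "blk i"] kge by linarith
                  show "?a \<le> Suc k" using hj by linarith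
                qed
                finally show "\<bar>(y0 - ?xd) $ i\<bar> \<le> S" .
              qed
              finally show ?thesis by simp
            qed
            have "norm (gradf y0 - gradf ?xd) \<le> \<Lambda>' * norm (y0 - ?xd)"
              using Lam' xB dB y0_def by blast
            also have "\<dots> \<le> \<Lambda>' * (?N * S)" using dn by (intro mult_left_mono) (auto simp: \<Lambda>'_def)
            finally show "norm (gradf y0 - gradf ?xd) \<le> \<Lambda>' * ?N * S" by (simp add: mult.assoc)
            show "(1 / \<gamma> ?h) * norm (x (Suc ?h) - x ?h) \<le> (1 / gm) * S"
              using invg[of ?h] inS[of ?h] hj kge gam[of ?h] Snn gmpos by (intro mult_mono) auto
          qed
          finally show ?thesis by (simp add: algebra_simps)
        qed
        have "norm (gradf y0 + W0) \<le> (\<Sum>j\<in>J. norm (?bp j (gradf y0 + W0)))"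
          by (rule norm_le_blocks[OF finJ blkJ])
        also have "\<dots> \<le> (\<Sum>j\<in>J. (\<Lambda>' * ?N + 1 / gm) * S)" using blk_b by (intro sum_mono) auto
        also have "\<dots> = c1 * S" by (simp add: cardJ c1_def)
        finally show ?thesis .
      qed
      have Psi_part: "dist0 (limiting_subdiff Psi (x (Suc k))) \<le> ereal (c0 * S)"
      proof -
        have "dist0 (limiting_subdiff Psi (x (Suc k))) \<le> ereal (norm (gradf y0 + W0))"
          using dist0_le frechet_limiting PsiF y0_def by blast
        also have "\<dots> \<le> ereal (c0 * S)"
        proof -
          have "c1 * S \<le> c0 * S" using Snn by (intro mult_right_mono) (auto simp: c0_def)
          thus ?thesis using Wb by simp
        qed
        finally show ?thesis .
      qed
      define w0 where "w0 = z (Suc k)"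
      have w0e: "w0 $ e h = x (Suc k - h)" if "h \<le> \<tau>" for h using z_def that by (simp add: w0_def)
      have w00: "w0 $ e 0 = y0" using w0e[of 0] by (simp add: y0_def)
      define aQ where "aQ = (\<lambda>h::nat. real (\<tau> - h + 1))"
      define Qs where "Qs = (\<lambda>w::real^'n^'t. \<Sum>h\<in>{1..\<tau>}. aQ h * (norm (w $ e h - w $ e (h - 1)))\<^sup>2)"
      define u where "u = (\<lambda>h. w0 $ e h - w0 $ e (h - 1))"
      define GQ where "GQ = (\<Sum>h\<in>{1..\<tau>}. (2 * aQ h) *\<^sub>R (axis (e h) (u h) - axis (e (h - 1)) (u h)))"
      define H where "H = (\<lambda>w::real^'n^'t. f (w $ e 0) + Cq * Qs w)"
      have Phi_eq: "Phi = (\<lambda>w. ereal (H w) + r (w $ e 0))"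
      proof (rule ext)
        fix w
        show "Phi w = ereal (H w) + r (w $ e 0)"
          by (cases "r (w $ e 0)") (simp_all add: Phi_def Psi_def H_def Qs_def aQ_def Cq_def \<rho>_def)
      qed
      have dH: "(H has_derivative (\<lambda>v. inner (axis (e 0) (gradf y0) + Cq *\<^sub>R GQ) v)) (at w0)"
      proof -
        have d1: "((\<lambda>w::real^'n^'t. f (w $ e 0)) has_derivative (\<lambda>v. inner (gradf y0) (v $ e 0))) (at w0)"
          using has_derivative_compose[OF vecnth_der f_grad[rule_format, of "w0 $ e 0"]] w00
          by (simp add: o_def)
        have d2: "(Qs has_derivative (\<lambda>v. inner GQ v)) (at w0)"
          unfolding Qs_def GQ_def u_def by (rule Q_deriv)
        have d3: "(H has_derivative (\<lambda>v. inner (gradf y0) (v $ e 0) + Cq * inner GQ v)) (at w0)"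
          unfolding H_def by (intro has_derivative_add d1 has_derivative_mult_right d2)
        show ?thesis
          by (rule has_derivative_eq_rhs[OF d3]) (simp add: fun_eq_iff inner_add_left inner_axis')
      qed
      have PhiF: "(axis (e 0) (gradf y0) + Cq *\<^sub>R GQ) + axis (e 0) W0 \<in> frechet_subdiff Phi w0"
      proof -
        have l1: "\<forall>w. norm ((\<lambda>w. w $ e 0) w - (\<lambda>w. w $ e 0) w0) \<le> norm (w - w0)"
          using Finite_Cartesian_Product.norm_nth_le by (metis vector_minus_component)
        have l2: "\<forall>w. inner W0 ((\<lambda>w. w $ e 0) w - (\<lambda>w. w $ e 0) w0) = inner (axis (e 0) W0) (w - w0)"
          by (simp add: inner_axis')
        have l3: "\<forall>y. r ((\<lambda>w. w $ e 0) w0) + ereal (inner W0 (y - (\<lambda>w. w $ e 0) w0) - (real m * \<mu>) * (norm (y - (\<lambda>w. w $ e 0) w0))\<^sup>2) \<le> r y"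
          using rlb w00 by simp
        have l4: "r ((\<lambda>w. w $ e 0) w0) = ereal (\<Sum>j\<in>J. a j)" using ry0 w00 by simp
        have l5: "real m * \<mu> \<ge> 0" using mupos by simp
        have "(axis (e 0) (gradf y0) + Cq *\<^sub>R GQ) + axis (e 0) W0 \<in> frechet_subdiff (\<lambda>w. ereal (H w) + r ((\<lambda>w. w $ e 0) w)) w0"
          by (rule frechet_main[OF dH l1 l2 l3 l4 l5])
        thus ?thesis by (simp add: Phi_eq)
      qed
      have GQb: "norm GQ \<le> 4 * real \<tau> * S"
      proof -
        let ?F = "\<lambda>i. norm (x (Suc i) - x i)"
        let ?g = "\<lambda>h. Suc k - h"
        have tk: "\<tau> \<le> k" using kge by simp
        have un: "norm (u h) = ?F (?g h)" if "h \<in> {1..\<tau>}" for h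
        proof -
          have "u h = x (Suc k - h) - x (Suc (Suc k - h))"
          proof -
            have h1: "h - 1 \<le> \<tau>" "h \<le> \<tau>" using that by auto
            have "Suc k - (h - 1) = Suc (Suc k - h)" using that tk by auto
            thus ?thesis using w0e[OF h1(1)] w0e[OF h1(2)] by (simp add: u_def)
          qed
          thus ?thesis by (simp add: norm_minus_commute)
        qed
        have "norm GQ \<le> (\<Sum>h\<in>{1..\<tau>}. norm ((2 * aQ h) *\<^sub>R (axis (e h) (u h) - axis (e (h - 1)) (u h))))"
          unfolding GQ_def by (rule norm_sum)
        also have "\<dots> \<le> (\<Sum>h\<in>{1..\<tau>}. 4 * real \<tau> * ?F (?g h))"
        proof (rule sum_mono)
          fix h assume h: "h \<in> {1..\<tau>}"
          have aq: "0 \<le> aQ h" "aQ h \<le> real \<tau>" using h by (auto simp: aQ_def)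
          have "norm (axis (e h) (u h) - axis (e (h - 1)) (u h)) \<le> norm (axis (e h) (u h)) + norm (axis (e (h - 1)) (u h))"
            by (rule norm_triangle_ineq4)
          also have "\<dots> = 2 * ?F (?g h)" using un[OF h] by (simp add: norm_axis)
          finally have n: "norm (axis (e h) (u h) - axis (e (h - 1)) (u h)) \<le> 2 * ?F (?g h)" .
          have "norm ((2 * aQ h) *\<^sub>R (axis (e h) (u h) - axis (e (h - 1)) (u h))) = (2 * aQ h) * norm (axis (e h) (u h) - axis (e (h - 1)) (u h))"
            using aq by simp
          also have "\<dots> \<le> (2 * real \<tau>) * (2 * ?F (?g h))"
            using aq n by (intro mult_mono) auto
          finally show "norm ((2 * aQ h) *\<^sub>R (axis (e h) (u h) - axis (e (h - 1)) (u h))) \<le> 4 * real \<tau> * ?F (?g h)"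
            by simp
        qed
        also have "\<dots> = 4 * real \<tau> * (\<Sum>h\<in>{1..\<tau>}. ?F (?g h))" by (simp add: sum_distrib_left)
        also have "(\<Sum>h\<in>{1..\<tau>}. ?F (?g h)) = (\<Sum>i\<in>?g ` {1..\<tau>}. ?F i)"
        proof -
          have "inj_on ?g {1..\<tau>}" using tk by (auto simp: inj_on_def)
          thus ?thesis by (simp add: sum.reindex)
        qed
        also have "\<dots> \<le> S" unfolding S_def using tk by (intro sum_mono2) auto
        finally show ?thesis by (simp add: mult_left_mono)
      qed
      have Phi_part: "dist0 (limiting_subdiff Phi (z (Suc k))) \<le> ereal (c0 * S)"
      proof -
        have "dist0 (limiting_subdiff Phi (z (Suc k))) \<le> ereal (norm ((axis (e 0) (gradf y0) + Cq *\<^sub>R GQ) + axis (e 0) W0))"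
          using dist0_le frechet_limiting PhiF w0_def by blast
        also have "\<dots> \<le> ereal (c0 * S)"
        proof -
          have ax: "(axis (e 0) (gradf y0) + Cq *\<^sub>R GQ) + axis (e 0) W0 = axis (e 0) (gradf y0 + W0) + Cq *\<^sub>R GQ"
            by (simp add: axis_def vec_eq_iff)
          have "norm ((axis (e 0) (gradf y0) + Cq *\<^sub>R GQ) + axis (e 0) W0) \<le> norm (axis (e 0) (gradf y0 + W0)) + norm (Cq *\<^sub>R GQ)"
            unfolding ax by (rule norm_triangle_ineq)
          also have "\<dots> = norm (gradf y0 + W0) + \<bar>Cq\<bar> * norm GQ" by (simp add: norm_axis)
          also have "\<dots> \<le> c1 * S + \<bar>Cq\<bar> * (4 * real \<tau> * S)"
            using Wb GQb by (intro add_mono mult_left_mono) auto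
          also have "\<dots> \<le> c0 * S" using Snn by (simp add: c0_def algebra_simps)
          finally show ?thesis by simp
        qed
        finally show ?thesis .
      qed
      show ?thesis using Phi_part Psi_part by simp
    qed
    thus "dist0 (limiting_subdiff Phi (z (Suc k))) \<le> ereal (c0 * (\<Sum>h=k-\<tau>-K..k. norm (x (Suc h) - x h))) \<and>
          dist0 (limiting_subdiff Psi (x (Suc k))) \<le> ereal (c0 * (\<Sum>h=k-\<tau>-K..k. norm (x (Suc h) - x h)))"
      unfolding S_def .
  qed
qed

end
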